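(* For real $0\le x<1$, $$ \begin{aligned} \mathcal C_2\left(\tfrac x2\right)&=\left(2\cos\tfrac{\pi x}{2}\right)^{\frac x2}\exp\left(\frac1{2\pi}\sum_{n=1}^\infty \frac{(-1)^n\sin(\pi nx)}{n^{2}}\right), \\ \mathcal C_3\left(\tfrac x2\right)&=\left(2\cos\tfrac{\pi x}{2}\right)^{(\frac x2)^2}\exp\biggl(\frac1{2\pi^2}\sum_{n=1}^\infty \frac{(-1)^n\cos(\pi nx)}{n^{3}} +\frac x{2\pi}\sum_{n=1}^\infty \frac{(-1)^n\sin(\pi nx)}{n^{2}}+\frac1{2\pi^2}\zeta_E(3)\biggr),\\ \mathcal C_4\left(\tfrac x2\right)&=\left(2\cos\tfrac{\pi x}{2}\right)^{(\frac x2)^3}\exp\biggl(\frac{3x}{4\pi^2}\sum_{n=1}^\infty \frac{(-1)^n\cos(\pi nx)}{n^{3}} -\frac 3{4\pi^3}\sum_{n=1}^\infty \frac{(-1)^n\sin(\pi nx)}{n^{4}}+\frac{3x^2}{8\pi}\sum_{n=1}^\infty \frac{(-1)^n\sin(\pi nx)}{n^{2}}\biggr), \\ \mathcal C_5\left(\tfrac x2\right)&=\left(2\cos\tfrac{\pi x}{2}\right)^{(\frac x2)^4}\exp\biggl(-\frac{3}{2\pi^4}\sum_{n=1}^\infty \frac{(-1)^n\cos(\pi nx)}{n^{5}} +\frac{3x^2}{4\pi^2}\sum_{n=1}^\infty \frac{(-1)^n\cos(\pi nx)}{n^{3}}-\frac{3x}{2\pi^3}\sum_{n=1}^\infty \frac{(-1)^n\sin(\pi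 nx)}{n^{4}} \\ &\qquad+\frac{x^3}{4\pi}\sum_{n=1}^\infty \frac{(-1)^n\sin(\pi nx)}{n^{2}}-\frac3{2\pi^4}\zeta_E(5) \biggr). \end{aligned} $$
   Context: For an integer $r\ge2$ let $P_r(y)=(1-y)\exp\left(y+\frac{y^2}{2}+\cdots+\frac{y^r}{r}\right)$. For real $|x|<\tfrac12$, the Kurokawa–Koyama multiple cosine function of order $r$ is the convergent positive product $\mathcal C_r(x)=\prod_{n\ge1,\ n\text{ odd}}\left\{P_r\left(\frac{x}{n/2}\right)P_r\left(-\frac{x}{n/2}\right)^{(-1)^{r-1}}\right\}^{(n/2)^{r-1}}$. $\zeta_E(s)=\sum_{n=1}^\infty\frac{(-1)^{n+1}}{n^s}$. *)

theory Defs
  imports "HOL-Analysis.Analysis"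
begin

definition P :: "nat \<Rightarrow> real \<Rightarrow> real" where
  "P r y = (1 - y) * exp (\<Sum>k=1..r. y ^ k / real k)"

definition mcos :: "nat \<Rightarrow> real \<Rightarrow> real" where
  "mcos r x = (\<Prod>k. (let h = (2 * real k + 1) / 2 in
      (P r (x / h) * P r (- x / h) powi ((-1) ^ (r - 1))) powr (h ^ (r - 1))))"

definition zetaE :: "real \<Rightarrow> real" where
  "zetaE s = (\<Sum>n. (-1) ^ n / (real (Suc n)) powr s)"

end

theory Submission
  imports Defs
begin


lemma series_deriv:
  fixes f f' :: "nat \<Rightarrow> real \<Rightarrow> real" and B :: "nat \<Rightarrow> real"
  assumes U: "convex U" "open U" and xa: "xa \<in> U" "summable (\<lambda>n. f n xa)"
    and d: "\<And>n x. x \<in> U \<Longrightarrow> (f n has_field_derivative f' n x) (at x)"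
    and b: "\<And>n x. x \<in> U \<Longrightarrow> \<bar>f' n x\<bar> \<le> B n" and B: "summable B" and x: "x \<in> U"
  shows "summable (\<lambda>n. f n x)" "((\<lambda>x. \<Sum>n. f n x) has_field_derivative (\<Sum>n. f' n x)) (at x)"
proof -
  have uc: "uniformly_convergent_on U (\<lambda>n x. \<Sum>i<n. f' i x)"
    by (rule Weierstrass_m_test'[OF _ B]) (use b in auto)
  have xi: "x \<in> interior U" using x U by (simp add: interior_open)
  show "summable (\<lambda>n. f n x)" "((\<lambda>x. \<Sum>n. f n x) has_field_derivative (\<Sum>n. f' n x)) (at x)"
  proof -
    have d': "\<And>n x. x \<in> U \<Longrightarrow> (f n has_field_derivative f' n x) (at x within U)"
      using d by (auto intro: has_field_derivative_at_within)
    show "summable (\<lambda>n. f n x)" "((\<lambda>x. \<Sum>n. f n x) has_field_derivative (\<Sum>n. f' n x)) (at x)"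
      using has_field_derivative_series'[OF U(1) d' uc xa xi] by auto
  qed
qed

lemma summable_inv_sq: "summable (\<lambda>n. c / real (Suc n) ^ 2)"
proof -
  have "summable (\<lambda>n. 1 / real (Suc n) ^ 2)"
    using inverse_squares_sums by (simp add: sums_iff add.commute)
  then have "summable (\<lambda>n. c * (1 / real (Suc n) ^ 2))" by (rule summable_mult)
  then show ?thesis by simp
qed



lemma odd_prod_cos:
  fixes x :: real assumes x: "\<bar>x\<bar> < 1"
  shows "(\<lambda>N. \<Prod>j<N. 1 - x^2/(2*real j+1)^2) \<longlonglongrightarrow> cos (pi*x/2)"
proof (cases "x = 0")
  case True then show ?thesis by simp
next
  case False
  define f where "f k = 1 - x^2 / real k ^ 2" for k :: nat
  define A where "A N = (\<Prod>k=1..2*N. f k)" for N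
  define B where "B N = (\<Prod>k=1..N. 1 - (x/2)^2 / real k ^ 2)" for N
  define Od where "Od N = (\<Prod>j<N. 1 - x^2/(2*real j+1)^2)" for N
  have AB: "A N = B N * Od N" for N
  proof (induction N)
    case 0 then show ?case by (simp add: A_def B_def Od_def)
  next
    case (Suc N)
    have e1: "2 * Suc N = Suc (Suc (2*N))" by simp
    have "A (Suc N) = A N * f (Suc (2*N)) * f (Suc (Suc (2*N)))"
      unfolding A_def e1 by (simp add: prod.cl_ivl_Suc)
    moreover have "B (Suc N) = B N * f (Suc (Suc (2*N)))"
    proof -
      have "real (Suc (Suc (2*N))) = 2 * real (Suc N)" by simp
      then have "(x/2)^2 / real (Suc N) ^ 2 = x^2 / real (Suc (Suc (2*N))) ^ 2"
        by (simp add: power_divide power_mult_distrib del: of_nat_Suc)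
      then show ?thesis unfolding B_def f_def by (simp add: prod.cl_ivl_Suc)
    qed
    moreover have "Od (Suc N) = Od N * f (Suc (2*N))"
      unfolding Od_def f_def by (simp add: add.commute)
    ultimately show ?case using Suc by simp
  qed
  have Bpos: "B N > 0" for N
    unfolding B_def
  proof (rule prod_pos)
    fix k assume "k \<in> {1..N}"
    then have k: "real k \<ge> 1" by auto
    have "\<bar>x/2\<bar> < 1" using x by simp
    then have "(x/2)^2 < 1" by (simp only: abs_square_less_1)
    also have "1 \<le> real k ^ 2" using k by simp
    finally show "0 < 1 - (x/2)^2 / real k ^ 2" using k by (simp add: field_simps)
  qed
  have lA: "A \<longlonglongrightarrow> sin (pi*x)/(pi*x)"
  proof -
    have "((\<lambda>n. \<Prod>k=1..n. f k) \<circ> (\<lambda>N. 2*N)) \<longlonglongrightarrow> sin (pi*x)/(pi*x)"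
    proof (rule LIMSEQ_subseq_LIMSEQ)
      show "(\<lambda>n. \<Prod>k=1..n. f k) \<longlonglongrightarrow> sin (pi*x)/(pi*x)"
        unfolding f_def by (rule sin_product_formula_real'[OF False])
    qed (auto simp: strict_mono_def)
    moreover have "A = (\<lambda>n. \<Prod>k=1..n. f k) \<circ> (\<lambda>N. 2*N)" by (simp add: A_def fun_eq_iff)
    ultimately show ?thesis by simp
  qed
  have x2: "x/2 \<noteq> 0" using False by simp
  have lB: "B \<longlonglongrightarrow> sin (pi*(x/2))/(pi*(x/2))"
    unfolding B_def by (rule sin_product_formula_real'[OF x2])
  have s2: "sin (pi*(x/2)) \<noteq> 0"
  proof
    assume "sin (pi*(x/2)) = 0"
    moreover have "\<bar>pi*(x/2)\<bar> < pi" using x pi_gt_zero by (simp add: abs_mult) 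
    ultimately show False using sin_zero_pi_iff False by auto
  qed
  have "Od = (\<lambda>N. A N / B N)"
  proof
    fix N show "Od N = A N / B N" using AB[of N] Bpos[of N] by (simp add: field_simps)
  qed
  also have "\<dots> \<longlonglongrightarrow> (sin (pi*x)/(pi*x)) / (sin (pi*(x/2))/(pi*(x/2)))"
    by (rule tendsto_divide[OF lA lB]) (use s2 False in simp)
  also have "(sin (pi*x)/(pi*x)) / (sin (pi*(x/2))/(pi*(x/2))) = cos (pi*x/2)"
  proof -
    have "sin (pi*x) = 2 * sin (pi*(x/2)) * cos (pi*(x/2))"
      using sin_double[of "pi*(x/2)"] by simp
    then show ?thesis using s2 False by (simp add: field_simps)
  qed
  finally show ?thesis unfolding Od_def .
qed



lemma ml_sums:
  fixes x :: real assumes x: "\<bar>x\<bar> < 1"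
  shows "(\<lambda>j. ln (1 - x^2/(2*real j+1)^2)) sums ln (cos (pi*x/2))"
proof -
  have pos: "1 - x^2/(2*real j+1)^2 > 0" for j
  proof -
    have "x^2 < 1" using x by (simp add: abs_square_less_1)
    also have "1 \<le> (2*real j+1)^2" by simp
    finally show ?thesis by (simp add: field_simps)
  qed
  have c: "cos (pi*x/2) > 0"
  proof (rule cos_gt_zero_pi)
    have "pi * (-1) < pi * x" using x by (intro mult_strict_left_mono) (auto simp: abs_less_iff)
    moreover have "pi * x < pi * 1" using x by (intro mult_strict_left_mono) (auto simp: abs_less_iff)
    ultimately show "-(pi/2) < pi*x/2" "pi*x/2 < pi/2" by auto
  qed
  have "(\<lambda>N. ln (\<Prod>j<N. 1 - x^2/(2*real j+1)^2)) \<longlonglongrightarrow> ln (cos (pi*x/2))"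
    by (rule tendsto_ln[OF odd_prod_cos[OF x]]) (use c in simp)
  moreover have "ln (\<Prod>j<N. 1 - x^2/(2*real j+1)^2) = (\<Sum>j<N. ln (1 - x^2/(2*real j+1)^2))" for N
    by (rule ln_prod) (use pos in \<open>auto simp: less_imp_neq[symmetric]\<close>)
  ultimately show ?thesis unfolding sums_def by simp
qed

definition md :: "nat \<Rightarrow> real \<Rightarrow> real" where
  "md j x = -2*x/((2*real j+1)^2 - x^2)"

lemma aux_deriv:
  fixes n x :: real assumes "n \<noteq> 0"
  shows "((\<lambda>x. 1 - x^2/n^2) has_field_derivative (-(2*x)/n^2)) (at x)"
proof -
  have "((\<lambda>x. x^2) has_field_derivative 2*x) (at x)" using DERIV_pow[of 2 x] by simp
  then have "((\<lambda>x. x^2/n^2) has_field_derivative 2*x/n^2) (at x)" by (rule DERIV_cdivide)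
  then have "((\<lambda>x. 1 - x^2/n^2) has_field_derivative 0 - 2*x/n^2) (at x)" by (rule DERIV_diff[OF DERIV_const])
  then show ?thesis by simp
qed

lemma md_deriv:
  fixes x :: real assumes x: "\<bar>x\<bar> < 1"
  shows "((\<lambda>x. ln (1 - x^2/(2*real j+1)^2)) has_field_derivative md j x) (at x)"
proof -
  have x2: "x^2 < 1" using x by (simp add: abs_square_less_1)
  have n1: "1 \<le> (2*real j+1)^2" by simp
  have pos: "1 - x^2/(2*real j+1)^2 > 0"
  proof -
    have "x^2 < (2*real j+1)^2" using x2 n1 by linarith
    then show ?thesis by (simp add: field_simps)
  qed
  have ne: "(2*real j+1)^2 - x^2 \<noteq> 0"
  proof -
    have "x^2 < (2*real j+1)^2" using x2 n1 by linarith
    then show ?thesis by simp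
  qed
  have d: "((\<lambda>x. 1 - x^2/(2*real j+1)^2) has_field_derivative (-(2*x)/(2*real j+1)^2)) (at x)"
    by (rule aux_deriv) (simp add: add_nonneg_pos)
  have e: "1 / (1 - x^2/(2*real j+1)^2) * (-(2*x)/(2*real j+1)^2) = md j x"
  proof -
    have "(2*real j+1)^2 \<noteq> 0" by simp
    then show ?thesis using ne unfolding md_def by (simp add: divide_simps) 
  qed
  show ?thesis using DERIV_chain2[OF DERIV_ln_divide[OF pos] d] e by simp
qed

lemma md_bound:
  fixes x a :: real assumes x: "\<bar>x\<bar> \<le> a" and a: "a < 1"
  shows "\<bar>md j x\<bar> \<le> (2/(1-a^2)) / real (Suc j)^2"
proof -
  define n where "n = 2*real j+1"
  have n1: "n \<ge> real (Suc j)" "real (Suc j) \<ge> 1" by (auto simp: n_def)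
  have xa: "x^2 \<le> a^2" using power_mono[OF x abs_ge_zero, of 2] by simp
  have a0: "\<bar>a\<bar> < 1" using a x by linarith
  have a2: "a^2 < 1" using a0 by (simp only: abs_square_less_1)
  have "1 \<le> n^2" using n1 by simp
  then have "a^2 * 1 \<le> a^2 * n^2" by (intro mult_left_mono) auto
  then have "x^2 \<le> a^2 * n^2" using xa by simp
  then have d: "n^2 - x^2 \<ge> (1-a^2) * n^2" by (simp add: algebra_simps)
  have dpos: "(1-a^2) * n^2 > 0" using a2 n1 by simp
  have "\<bar>md j x\<bar> = 2*\<bar>x\<bar>/(n^2 - x^2)" using d dpos by (simp add: md_def n_def abs_divide abs_mult)
  also have "\<dots> \<le> 2/((1-a^2)*n^2)"
  proof -
    have "\<bar>x\<bar> \<le> 1" using x a by simp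
    then have "2*\<bar>x\<bar>/(n^2 - x^2) \<le> 2/(n^2-x^2)" using d dpos by (simp add: divide_right_mono)
    also have "\<dots> \<le> 2/((1-a^2)*n^2)" using d dpos by (simp add: frac_le)
    finally show ?thesis .
  qed
  also have "\<dots> \<le> (2/(1-a^2)) / real (Suc j)^2"
  proof -
    have "real (Suc j)^2 \<le> n^2" using n1 by (simp add: power_mono)
    moreover have "0 < real (Suc j)^2" by simp
    moreover have "0 \<le> 2/(1-a^2)" using a2 by simp
    moreover have "0 < n^2" using n1 by simp
    ultimately have "(2/(1-a^2)) / n^2 \<le> (2/(1-a^2)) / real (Suc j)^2"
      by (intro divide_left_mono) (auto intro!: mult_pos_pos)
    then show ?thesis by simp
  qed
  finally show ?thesis .
qed



definition lP :: "nat \<Rightarrow> real \<Rightarrow> real" where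
  "lP r y = ln (1-y) + (\<Sum>i=1..r. y^i / real i)"

lemma lP_deriv:
  fixes y :: real assumes y: "y < 1"
  shows "(lP r has_field_derivative (-(y^r)/(1-y))) (at y)"
proof (induction r)
  case 0
  have "((\<lambda>y. 1 - y) has_field_derivative (0 - 1)) (at y)"
    by (intro DERIV_diff DERIV_const DERIV_ident)
  from DERIV_chain2[OF DERIV_ln_divide this] y
  have "((\<lambda>y. ln (1 - y)) has_field_derivative 1/(1-y) * (0-1)) (at y)" by simp
  moreover have "lP 0 = (\<lambda>y. ln (1 - y))" by (simp add: lP_def fun_eq_iff)
  ultimately show ?case by simp
next
  case (Suc r)
  have e: "lP (Suc r) = (\<lambda>y. lP r y + y^Suc r / real (Suc r))"
    by (simp add: lP_def fun_eq_iff sum.cl_ivl_Suc)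
  have "((\<lambda>y. y^Suc r) has_field_derivative real (Suc r) * y^r) (at y)"
    using DERIV_pow[of "Suc r" y] by simp
  then have "((\<lambda>y. y^Suc r / real (Suc r)) has_field_derivative real (Suc r) * y^r / real (Suc r)) (at y)"
    by (rule DERIV_cdivide)
  then have "((\<lambda>y. y^Suc r / real (Suc r)) has_field_derivative y^r) (at y)" by simp
  from DERIV_add[OF Suc this]
  have "((\<lambda>y. lP r y + y^Suc r / real (Suc r)) has_field_derivative (-(y^r)/(1-y) + y^r)) (at y)" .
  moreover have "-(y^r)/(1-y) + y^r = -(y^Suc r)/(1-y)" using y by (simp add: field_simps)
  ultimately show ?case using e by simp
qed

lemma P_pos: "y < 1 \<Longrightarrow> P r y > 0"
  by (simp add: P_def)

lemma ln_P: "y < 1 \<Longrightarrow> ln (P r y) = lP r y"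
  by (simp add: P_def lP_def ln_mult)

definition tt :: "nat \<Rightarrow> real \<Rightarrow> nat \<Rightarrow> real" where
  "tt r x k = ((2*real k+1)/2)^(r-1) *
      (lP r (x/(2*real k+1)) + (-1)^(r-1) * lP r (-x/(2*real k+1)))"

lemma tt_zero: "tt r 0 k = 0"
proof -
  have "(\<Sum>i=1..r. (0::real)^i / real i) = 0" by (rule sum.neutral) auto
  then show ?thesis by (simp add: tt_def lP_def)
qed

lemma alg1:
  fixes c A u n :: real assumes "1 - u \<noteq> 0" "1 + u \<noteq> 0" "n \<noteq> 0"
  shows "c * (-A/(1-u)*(1/n) + -A/(1+u)/n) = -(c*A)*(1/(1-u)+1/(1+u))/n"
  by (simp add: divide_inverse algebra_simps)

lemma alg2:
  fixes c x u n :: real assumes n: "n > 0" and x: "\<bar>x\<bar> < n" and u: "u = x/n" and nx: "n^2 - x^2 \<noteq> 0"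
  shows "-(c*u)*(1/(1-u)+1/(1+u))/n = c * (-2*x/(n^2-x^2))"
proof -
  have a1: "n - x \<noteq> 0" "n + x \<noteq> 0" using x n by auto
  have "1 - u = (n-x)/n" "1 + u = (n+x)/n" using n u by (simp_all add: field_simps)
  then have "1/(1-u) = n/(n-x)" "1/(1+u) = n/(n+x)" by simp_all
  then have "1/(1-u)+1/(1+u) = n/(n-x) + n/(n+x)" by simp
  also have "\<dots> = (n*(n+x) + n*(n-x))/((n-x)*(n+x))" using a1 by (simp add: add_frac_eq)
  also have "(n*(n+x) + n*(n-x)) = 2*n^2" by (simp add: algebra_simps power2_eq_square)
  also have "(n-x)*(n+x) = n^2-x^2" by (simp add: algebra_simps power2_eq_square)
  finally have S: "1/(1-u)+1/(1+u) = 2*n^2/(n^2-x^2)" .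
  have "-(c*u)*(1/(1-u)+1/(1+u))/n = -(c*(x/n))*(2*n^2/(n^2-x^2))/n" by (simp only: S) (simp only: u)
  also have "\<dots> = c * (-2*x/(n^2-x^2))" using n nx by (simp add: field_simps power2_eq_square)
  finally show ?thesis .
qed

lemma tt_alg:
  fixes x n u :: real and q :: nat
  assumes n: "n > 0" and u: "u = x/n" and x: "\<bar>x\<bar> < n"
  shows "(n/2)^q * (-(u^Suc q)/(1-u) * (1/n) + (-1)^q * (-((-u)^Suc q)/(1-(-u)) * (-1/n)))
         = (x/2)^q * (-2*x/(n^2-x^2))"
proof -
  have u1: "\<bar>u\<bar> < 1" using x n u by (simp add: abs_divide)
  have d1: "1 - u \<noteq> 0" "1 + u \<noteq> 0" using u1 by auto
  have m1: "(-1::real)^q * (-1)^Suc q = -1"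
  proof -
    have "(-1::real)^q * (-1)^q = ((-1)*(-1))^q" by (simp only: power_mult_distrib)
    then have "(-1::real)^q * (-1)^q = 1" by simp
    then show ?thesis by (simp only: power_Suc)
  qed
  have s: "(-1::real)^q * (-((-u)^Suc q)/(1-(-u)) * (-1/n)) = -(u^Suc q)/(1+u)/n"
  proof -
    have "(-u)^Suc q = (-1)^Suc q * u^Suc q" by (simp only: power_mult_distrib[symmetric]) simp
    moreover have "\<And>s t A w n::real. s*(-(t*A)/w*(-1/n)) = (s*t)*A/w/n"
      by (simp add: divide_inverse algebra_simps)
    moreover have "1-(-u) = 1+u" by simp
    ultimately have "(-1::real)^q * (-((-u)^Suc q)/(1-(-u)) * (-1/n)) =
        ((-1)^q * (-1)^Suc q) * (u^Suc q)/(1+u)/n" by metis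
    then show ?thesis unfolding m1 by simp
  qed
  have p: "(n/2)^q * u^Suc q = (x/2)^q * u"
  proof -
    have "(n/2)^q * u^q = (n/2*u)^q" by (rule power_mult_distrib[symmetric])
    also have "n/2*u = x/2" using u n by simp
    finally show ?thesis by (simp add: mult.assoc[symmetric])
  qed
  have nx: "n^2 - x^2 \<noteq> 0"
  proof -
    have "\<bar>x\<bar>^2 < n^2" using x n by (intro power_strict_mono) auto
    then show ?thesis by simp
  qed
  have "(n/2)^q * (-(u^Suc q)/(1-u) * (1/n) + (-1)^q * (-((-u)^Suc q)/(1-(-u)) * (-1/n)))
        = (n/2)^q * (-(u^Suc q)/(1-u) * (1/n) + -(u^Suc q)/(1+u)/n)"
    unfolding s by simp
  also have "\<dots> = - ((n/2)^q * u^Suc q) * (1/(1-u) + 1/(1+u)) / n"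
    by (rule alg1) (use d1 n in auto)
  also have "\<dots> = - ((x/2)^q * u) * (1/(1-u) + 1/(1+u)) / n" using p by simp
  also have "\<dots> = (x/2)^q * (-2*x/(n^2-x^2))"
    by (rule alg2) (use x n u nx in auto)
  finally show ?thesis .
qed



lemma tt_deriv:
  fixes x :: real assumes x: "\<bar>x\<bar> < 1" and r: "r = Suc q"
  shows "((\<lambda>x. tt r x k) has_field_derivative (x/2)^(r-1) * md k x) (at x)"
proof -
  define n where "n = 2*real k+1"
  have n: "n > 0" "\<bar>x\<bar> < n" using x by (auto simp: n_def)
  have y1: "x/n < 1" "-x/n < 1" using n by (auto simp: field_simps abs_less_iff)
  have i1: "((\<lambda>x. x/n) has_field_derivative 1/n) (at x)"
    using DERIV_cdivide[OF DERIV_ident, of n] by simp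
  have i2: "((\<lambda>x. -x/n) has_field_derivative -1/n) (at x)"
    using DERIV_cdivide[OF DERIV_minus[OF DERIV_ident], of n] by simp
  have d1: "((\<lambda>x. lP r (x/n)) has_field_derivative (-((x/n)^r)/(1-x/n)) * (1/n)) (at x)"
    by (rule DERIV_chain2[OF lP_deriv[OF y1(1)] i1])
  have d2: "((\<lambda>x. lP r (-x/n)) has_field_derivative (-((-x/n)^r)/(1-(-x/n))) * (-1/n)) (at x)"
    by (rule DERIV_chain2[OF lP_deriv[OF y1(2)] i2])
  have d: "((\<lambda>x. (n/2)^q * (lP r (x/n) + (-1)^q * lP r (-x/n))) has_field_derivative
      (n/2)^q * ((-((x/n)^r)/(1-x/n)) * (1/n) + (-1)^q * ((-((-x/n)^r)/(1-(-x/n))) * (-1/n)))) (at x)"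
    by (intro DERIV_cmult DERIV_add d1 d2)
  have e1: "-x/n = -(x/n)" by simp
  have v: "(n/2)^q * ((-((x/n)^r)/(1-x/n)) * (1/n) + (-1)^q * ((-((-x/n)^r)/(1-(-x/n))) * (-1/n)))
      = (x/2)^q * (-2*x/(n^2-x^2))"
    unfolding e1 r by (rule tt_alg[OF n(1) refl n(2)])
  have f: "(\<lambda>x. tt r x k) = (\<lambda>x. (n/2)^q * (lP r (x/n) + (-1)^q * lP r (-x/n)))"
    by (simp add: tt_def n_def r fun_eq_iff)
  show ?thesis using d unfolding f v by (simp add: md_def n_def r)
qed

lemma fac_eq:
  fixes y c :: real assumes y: "\<bar>y\<bar> < 1"
  shows "(P r y * P r (-y) powi ((-1)^(r-1))) powr c = exp (c * (lP r y + (-1)^(r-1) * lP r (-y)))"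
proof -
  have p: "P r y > 0" "P r (-y) > 0" using y by (auto intro!: P_pos simp: abs_less_iff)
  show ?thesis
  proof (cases "even (r-1)")
    case True
    then have "P r y * P r (-y) powi ((-1)^(r-1)) = P r y * P r (-y)" by simp
    moreover have "ln (P r y * P r (-y)) = lP r y + (-1)^(r-1) * lP r (-y)"
      using p True y by (simp add: ln_mult ln_P abs_less_iff)
    ultimately show ?thesis using p by (simp add: powr_def)
  next
    case False
    then have "P r y * P r (-y) powi ((-1)^(r-1)) = P r y * inverse (P r (-y))" by simp
    moreover have "ln (P r y * inverse (P r (-y))) = lP r y + (-1)^(r-1) * lP r (-y)"
      using p False y by (simp add: ln_mult ln_inverse ln_P abs_less_iff)
    ultimately show ?thesis using p by (simp add: powr_def)
  qed
qed

lemma fac_tt: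
  fixes x :: real assumes x: "\<bar>x\<bar> < 1"
  shows "(let h = (2 * real k + 1) / 2 in
      (P r ((x/2) / h) * P r (- (x/2) / h) powi ((-1) ^ (r - 1))) powr (h ^ (r - 1))) = exp (tt r x k)"
proof -
  define n where "n = 2*real k+1"
  have n: "n > 0" "n \<ge> 1" by (auto simp: n_def)
  have e1: "(x/2) / (n/2) = x/n" "(- (x/2)) / (n/2) = -(x/n)" using n by (auto simp: field_simps)
  have y: "\<bar>x/n\<bar> < 1" using x n by (simp add: abs_divide field_simps)
  have "(P r (x/n) * P r (-(x/n)) powi ((-1)^(r-1))) powr ((n/2)^(r-1))
      = exp ((n/2)^(r-1) * (lP r (x/n) + (-1)^(r-1) * lP r (-(x/n))))"
    by (rule fac_eq[OF y])
  then show ?thesis unfolding Let_def n_def[symmetric] e1 by (simp add: tt_def n_def)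
qed

lemma mcos_exp:
  fixes x :: real assumes x: "\<bar>x\<bar> < 1" and s: "summable (tt r x)"
  shows "mcos r (x/2) = exp (\<Sum>k. tt r x k)"
proof -
  have "mcos r (x/2) = (\<Prod>k. exp (tt r x k))"
    unfolding mcos_def using fac_tt[OF x] by simp
  also have "\<dots> = exp (\<Sum>k. tt r x k)" by (rule prodinf_exp[OF s])
  finally show ?thesis .
qed



lemma md_summable:
  fixes x a :: real assumes x: "\<bar>x\<bar> \<le> a" and a: "a < 1"
  shows "summable (\<lambda>k. md k x)"
  by (rule summable_comparison_test[OF _ summable_inv_sq[of "2/(1-a^2)"]])
     (use md_bound[OF x a] in auto)

lemma Lsum_props:
  fixes x a :: real assumes a: "a < 1" and x: "x \<in> {-a<..<a}"
  shows "((\<lambda>x. \<Sum>k. ln (1 - x^2/(2*real k+1)^2)) has_field_derivative (\<Sum>k. md k x)) (at x)"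
proof -
  have a1: "\<And>y. y \<in> {-a<..<a} \<Longrightarrow> \<bar>y\<bar> < 1" using a by auto
  have z: "0 \<in> {-a<..<a}" using x by auto
  have dB: "\<bar>md k y\<bar> \<le> (2/(1-a^2))/real (Suc k)^2" if "y \<in> {-a<..<a}" for k y
    using that by (intro md_bound) (use a in auto)
  have dd: "((\<lambda>x. ln (1 - x^2/(2*real k+1)^2)) has_field_derivative md k y) (at y)"
    if "y \<in> {-a<..<a}" for k y
    by (rule md_deriv) (use a1 that in auto)
  have s0: "summable (\<lambda>k. ln (1 - 0^2/(2*real k+1)^2))" by simp
  show ?thesis
    by (rule series_deriv(2)[where f = "\<lambda>k x. ln (1 - x^2/(2*real k+1)^2)" and f' = md,
          OF convex_real_interval(8) open_greaterThanLessThan z s0 dd dB summable_inv_sq x])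
qed

lemma F_props:
  fixes x a :: real assumes a: "a < 1" and x: "x \<in> {-a<..<a}" and r: "r = Suc q"
  shows "summable (tt r x)"
    "((\<lambda>x. \<Sum>k. tt r x k) has_field_derivative (x/2)^(r-1) * (\<Sum>k. md k x)) (at x)"
proof -
  have a1: "\<And>y. y \<in> {-a<..<a} \<Longrightarrow> \<bar>y\<bar> < 1" using a by auto
  have z: "0 \<in> {-a<..<a}" using x by auto
  have b: "\<bar>(y/2)^(r-1) * md k y\<bar> \<le> (2/(1-a^2))/real (Suc k)^2" if y: "y \<in> {-a<..<a}" for y k
  proof -
    have "\<bar>y/2\<bar> \<le> 1" using a1[OF y] by simp
    then have "\<bar>y/2\<bar>^(r-1) \<le> 1" by (rule power_le_one[OF abs_ge_zero])
    then have "\<bar>(y/2)^(r-1)\<bar> \<le> 1" by (simp only: power_abs)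
    then have "\<bar>(y/2)^(r-1) * md k y\<bar> \<le> 1 * \<bar>md k y\<bar>" unfolding abs_mult
      by (intro mult_right_mono) auto
    also have "\<dots> \<le> (2/(1-a^2))/real (Suc k)^2" using md_bound[of y a k] y a by auto
    finally show ?thesis .
  qed
  note sd = series_deriv[where f = "\<lambda>k x. tt r x k" and f' = "\<lambda>k x. (x/2)^(r-1) * md k x" and
      B = "\<lambda>k. (2/(1-a^2))/real (Suc k)^2" and xa = 0 and U = "{-a<..<a}" and x = x]
  have dd: "((\<lambda>x. tt r x k) has_field_derivative (y/2)^(r-1) * md k y) (at y)"
    if "y \<in> {-a<..<a}" for k y
    by (rule tt_deriv[OF _ r]) (use a1 that in auto)
  have s0: "summable (\<lambda>k. tt r 0 k)" by (simp add: tt_zero)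
  note sd' = sd[OF convex_real_interval(8) open_greaterThanLessThan z s0 dd b summable_inv_sq x]
  have p1: "summable (\<lambda>k. tt r x k)" by (rule sd'(1))
  have p2: "((\<lambda>x. \<Sum>k. tt r x k) has_field_derivative (\<Sum>k. (x/2)^(r-1) * md k x)) (at x)"
    by (rule sd'(2))
  note p = p1 p2
  show "summable (tt r x)" using p(1) by simp
  have "(\<Sum>k. (x/2)^(r-1) * md k x) = (x/2)^(r-1) * (\<Sum>k. md k x)"
    by (rule suminf_mult[OF md_summable[of x a]]) (use x a in auto)
  then show "((\<lambda>x. \<Sum>k. tt r x k) has_field_derivative (x/2)^(r-1) * (\<Sum>k. md k x)) (at x)"
    using p(2) by simp
qed



lemma inv_pow_bound:
  fixes c :: real assumes "k \<ge> 2" "c \<ge> 0"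
  shows "c / real (Suc n)^k \<le> c / real (Suc n)^2"
proof -
  have "real (Suc n)^2 \<le> real (Suc n)^k" using assms by (intro power_increasing) auto
  then show ?thesis using assms by (intro divide_left_mono) auto
qed

lemma cos_ser_deriv:
  fixes x :: real assumes k: "k \<ge> 2"
  shows "((\<lambda>x. \<Sum>n. (-1)^Suc n * cos (pi * real (Suc n) * x) / real (Suc n)^Suc k) has_field_derivative
          -pi * (\<Sum>n. (-1)^Suc n * sin (pi * real (Suc n) * x) / real (Suc n)^k)) (at x)"
proof -
  define f' where "f' n x = -pi * ((-1)^Suc n * sin (pi * real (Suc n) * x) / real (Suc n)^k)" for n x
  have dd: "((\<lambda>x. (-1)^Suc n * cos (pi * real (Suc n) * x) / real (Suc n)^Suc k) has_field_derivative f' n y) (at y)"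
    if "y \<in> UNIV" for n y
  proof -
    have "((\<lambda>x. (-1)^Suc n * cos (pi * real (Suc n) * x) / real (Suc n)^Suc k) has_field_derivative
        (-1)^Suc n * (- sin (pi * real (Suc n) * y) * (pi * real (Suc n))) / real (Suc n)^Suc k) (at y)"
      by (auto intro!: derivative_eq_intros)
    moreover have "(-1)^Suc n * (- sin (pi * real (Suc n) * y) * (pi * real (Suc n))) / real (Suc n)^Suc k = f' n y"
      unfolding f'_def by (simp add: field_simps del: of_nat_Suc)
    ultimately show ?thesis by simp
  qed
  have b: "\<bar>f' n y\<bar> \<le> pi / real (Suc n)^2" if "y \<in> UNIV" for n y
  proof -
    have "\<bar>f' n y\<bar> = pi * \<bar>sin (pi * real (Suc n) * y)\<bar> / real (Suc n)^k"
      by (simp add: f'_def abs_mult abs_divide power_abs)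
    also have "\<dots> \<le> pi * 1 / real (Suc n)^k"
      by (intro divide_right_mono mult_left_mono) auto
    also have "\<dots> \<le> pi / real (Suc n)^2" using inv_pow_bound[OF k, of pi] by simp
    finally show ?thesis .
  qed
  have s0: "summable (\<lambda>n. (-1)^Suc n * cos (pi * real (Suc n) * 0) / real (Suc n)^Suc k)"
  proof (rule summable_comparison_test[OF _ summable_inv_sq[of 1]], intro exI allI impI)
    fix n :: nat
    have "norm ((-1)^Suc n * cos (pi * real (Suc n) * 0) / real (Suc n)^Suc k) = 1 / real (Suc n)^Suc k"
      by (simp add: abs_divide power_abs)
    also have "\<dots> \<le> 1 / real (Suc n)^2" using inv_pow_bound[of "Suc k" 1] k by simp
    finally show "norm ((-1)^Suc n * cos (pi * real (Suc n) * 0) / real (Suc n)^Suc k) \<le> 1 / real (Suc n)^2" .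
  qed
  note sd = series_deriv(2)[where f = "\<lambda>n x. (-1)^Suc n * cos (pi * real (Suc n) * x) / real (Suc n)^Suc k",
      OF convex_UNIV open_UNIV UNIV_I s0 dd b summable_inv_sq UNIV_I]
  have sm: "summable (\<lambda>n. (-1)^Suc n * sin (pi * real (Suc n) * x) / real (Suc n)^k)"
  proof (rule summable_comparison_test[OF _ summable_inv_sq[of 1]], intro exI allI impI)
    fix n :: nat
    have "norm ((-1)^Suc n * sin (pi * real (Suc n) * x) / real (Suc n)^k) \<le> 1 / real (Suc n)^k"
      by (simp add: abs_divide power_abs abs_mult divide_right_mono)
    also have "\<dots> \<le> 1 / real (Suc n)^2" using inv_pow_bound[of k 1] k by simp
    finally show "norm ((-1)^Suc n * sin (pi * real (Suc n) * x) / real (Suc n)^k) \<le> 1 / real (Suc n)^2" .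
  qed
  have "(\<Sum>n. f' n x) = -pi * (\<Sum>n. (-1)^Suc n * sin (pi * real (Suc n) * x) / real (Suc n)^k)"
    unfolding f'_def by (rule suminf_mult[OF sm])
  then show ?thesis using sd[of x] by (simp only:)
qed

lemma sin_ser_deriv:
  fixes x :: real assumes k: "k \<ge> 2"
  shows "((\<lambda>x. \<Sum>n. (-1)^Suc n * sin (pi * real (Suc n) * x) / real (Suc n)^Suc k) has_field_derivative
          pi * (\<Sum>n. (-1)^Suc n * cos (pi * real (Suc n) * x) / real (Suc n)^k)) (at x)"
proof -
  define f' where "f' n x = pi * ((-1)^Suc n * cos (pi * real (Suc n) * x) / real (Suc n)^k)" for n x
  have dd: "((\<lambda>x. (-1)^Suc n * sin (pi * real (Suc n) * x) / real (Suc n)^Suc k) has_field_derivative f' n y) (at y)"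
    if "y \<in> UNIV" for n y
  proof -
    have "((\<lambda>x. (-1)^Suc n * sin (pi * real (Suc n) * x) / real (Suc n)^Suc k) has_field_derivative
        (-1)^Suc n * (cos (pi * real (Suc n) * y) * (pi * real (Suc n))) / real (Suc n)^Suc k) (at y)"
      by (auto intro!: derivative_eq_intros)
    moreover have "(-1)^Suc n * (cos (pi * real (Suc n) * y) * (pi * real (Suc n))) / real (Suc n)^Suc k = f' n y"
      unfolding f'_def by (simp add: field_simps del: of_nat_Suc)
    ultimately show ?thesis by simp
  qed
  have b: "\<bar>f' n y\<bar> \<le> pi / real (Suc n)^2" if "y \<in> UNIV" for n y
  proof -
    have "\<bar>f' n y\<bar> = pi * \<bar>cos (pi * real (Suc n) * y)\<bar> / real (Suc n)^k"
      by (simp add: f'_def abs_mult abs_divide power_abs)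
    also have "\<dots> \<le> pi * 1 / real (Suc n)^k"
      by (intro divide_right_mono mult_left_mono) auto
    also have "\<dots> \<le> pi / real (Suc n)^2" using inv_pow_bound[OF k, of pi] by simp
    finally show ?thesis .
  qed
  have s0: "summable (\<lambda>n. (-1)^Suc n * sin (pi * real (Suc n) * 0) / real (Suc n)^Suc k)"
    by simp
  note sd = series_deriv(2)[where f = "\<lambda>n x. (-1)^Suc n * sin (pi * real (Suc n) * x) / real (Suc n)^Suc k",
      OF convex_UNIV open_UNIV UNIV_I s0 dd b summable_inv_sq UNIV_I]
  have sm: "summable (\<lambda>n. (-1)^Suc n * cos (pi * real (Suc n) * x) / real (Suc n)^k)"
  proof (rule summable_comparison_test[OF _ summable_inv_sq[of 1]], intro exI allI impI)
    fix n :: nat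
    have "norm ((-1)^Suc n * cos (pi * real (Suc n) * x) / real (Suc n)^k) \<le> 1 / real (Suc n)^k"
      by (simp add: abs_divide power_abs abs_mult divide_right_mono)
    also have "\<dots> \<le> 1 / real (Suc n)^2" using inv_pow_bound[of k 1] k by simp
    finally show "norm ((-1)^Suc n * cos (pi * real (Suc n) * x) / real (Suc n)^k) \<le> 1 / real (Suc n)^2" .
  qed
  have "(\<Sum>n. f' n x) = pi * (\<Sum>n. (-1)^Suc n * cos (pi * real (Suc n) * x) / real (Suc n)^k)"
    unfolding f'_def by (rule suminf_mult[OF sm])
  then show ?thesis using sd[of x] by (simp only:)
qed



lemma re_term:
  fixes \<rho> t :: real and m :: nat
  shows "- Re (- ((- (complex_of_real \<rho> * cis t))^m) / of_nat m) = (-1)^m * \<rho>^m * cos (real m * t) / real m"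
proof -
  have "(- (complex_of_real \<rho> * cis t))^m = complex_of_real ((-1)^m * \<rho>^m) * cis (real m * t)"
    by (simp add: power_minus' power_mult_distrib Complex.DeMoivre)
  then show ?thesis by (simp add: Re_divide_of_nat)
qed

lemma cos_log_series:
  fixes \<rho> x :: real assumes r: "0 \<le> \<rho>" "\<rho> < 1"
  shows "(\<lambda>n. (-1)^Suc n * \<rho>^Suc n * cos (pi * real (Suc n) * x) / real (Suc n))
           sums (- ln (cmod (1 + complex_of_real \<rho> * cis (pi*x))))"
proof -
  define z where "z = complex_of_real \<rho> * cis (pi*x)"
  have nz: "cmod z < 1" using r by (simp add: z_def norm_mult)
  define f where "f n = - ((-z)^n) / of_nat n" for n
  have "f sums ln (1 + z)" unfolding f_def by (rule Ln_series'[OF nz])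
  moreover have "f 0 = 0" by (simp add: f_def)
  ultimately have "(\<lambda>n. f (Suc n)) sums ln (1 + z)" using sums_Suc_iff[of f] by simp
  then have "(\<lambda>n. Re (f (Suc n))) sums Re (ln (1 + z))" by (rule sums_Re)
  then have "(\<lambda>n. - Re (f (Suc n))) sums (- Re (ln (1 + z)))" by (rule sums_minus)
  moreover have "1 + z \<noteq> 0"
  proof
    assume "1 + z = 0" then have "z = -1" by (simp add: add_eq_0_iff)
    with nz show False by simp
  qed
  ultimately have "(\<lambda>n. - Re (f (Suc n))) sums (- ln (cmod (1 + z)))" by simp
  moreover have "- Re (f (Suc n)) = (-1)^Suc n * \<rho>^Suc n * cos (pi * real (Suc n) * x) / real (Suc n)" for n
    unfolding f_def z_def by (subst re_term) (simp add: mult_ac)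
  ultimately show ?thesis unfolding z_def by simp
qed

lemma norm_one_cis:
  fixes t :: real assumes t: "\<bar>t\<bar> < pi"
  shows "cmod (1 + cis t) = 2 * cos (t/2)"
proof -
  have c: "cos (t/2) > 0" by (rule cos_gt_zero_pi) (use t in auto)
  have "cmod (1 + cis t)^2 = (1 + cos t)^2 + (sin t)^2"
    by (simp add: cmod_power2)
  also have "\<dots> = 2 + 2 * cos t" by (simp add: power2_eq_square algebra_simps sin_squared_eq)
  also have "cos t = 2 * cos (t/2)^2 - 1" using cos_double_cos[of "t/2"] by simp
  finally have "cmod (1 + cis t)^2 = (2 * cos (t/2))^2" by (simp add: power2_eq_square)
  then show ?thesis by (rule power2_eq_imp_eq) (use c in auto)
qed

lemma ln_diff_bound:
  fixes u v c :: real assumes c: "c > 0" "u \<ge> c" "v \<ge> c"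
  shows "\<bar>ln u - ln v\<bar> \<le> \<bar>u - v\<bar> / c"
proof -
  have a: "ln u - ln v \<le> \<bar>u - v\<bar> / c" if "u \<ge> c" "v \<ge> c" for u v
  proof -
    have "ln u - ln v = ln (u/v)" using that c by (simp add: ln_div)
    also have "\<dots> \<le> u/v - 1" using that c by (intro ln_le_minus_one) auto
    also have "\<dots> = (u - v)/v" using that c by (simp add: field_simps)
    also have "\<dots> \<le> \<bar>u - v\<bar>/v" using that c by (intro divide_right_mono) auto
    also have "\<dots> \<le> \<bar>u - v\<bar>/c" using that c by (intro divide_left_mono) auto
    finally show ?thesis .
  qed
  show ?thesis using a[of u v] a[of v u] c by (auto simp: abs_minus_commute)
qed

lemma norm_diff_cis:
  fixes \<rho> t :: real assumes "0 \<le> \<rho>" "\<rho> \<le> 1"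
  shows "\<bar>cmod (1 + complex_of_real \<rho> * cis t) - cmod (1 + cis t)\<bar> \<le> 1 - \<rho>"
proof -
  have "\<bar>cmod (1 + complex_of_real \<rho> * cis t) - cmod (1 + cis t)\<bar>
      \<le> cmod ((1 + complex_of_real \<rho> * cis t) - (1 + cis t))" by (rule norm_triangle_ineq3)
  also have "(1 + complex_of_real \<rho> * cis t) - (1 + cis t) = complex_of_real (\<rho> - 1) * cis t"
    by (simp add: algebra_simps)
  also have "cmod (complex_of_real (\<rho> - 1) * cis t) = \<bar>\<rho> - 1\<bar>"
    by (simp only: norm_mult norm_of_real norm_cis mult_1_right)
  also have "\<dots> = 1 - \<rho>" using assms by simp
  finally show ?thesis .
qed



lemma Q_deriv:
  fixes \<rho> x :: real assumes r: "0 \<le> \<rho>" "\<rho> < 1"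
  shows "((\<lambda>x. \<Sum>n. (-1)^Suc n * \<rho>^Suc n * sin (pi * real (Suc n) * x) / real (Suc n)^2) has_field_derivative
          (-pi * ln (cmod (1 + complex_of_real \<rho> * cis (pi*x))))) (at x)"
proof -
  define f' where "f' n y = pi * ((-1)^Suc n * \<rho>^Suc n * cos (pi * real (Suc n) * y) / real (Suc n))" for n y
  have dd: "((\<lambda>x. (-1)^Suc n * \<rho>^Suc n * sin (pi * real (Suc n) * x) / real (Suc n)^2) has_field_derivative f' n y) (at y)"
    if "y \<in> UNIV" for n y
  proof -
    have "((\<lambda>x. (-1)^Suc n * \<rho>^Suc n * sin (pi * real (Suc n) * x) / real (Suc n)^2) has_field_derivative
        (-1)^Suc n * \<rho>^Suc n * (cos (pi * real (Suc n) * y) * (pi * real (Suc n))) / real (Suc n)^2) (at y)"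
    proof -
      have i: "((\<lambda>x. pi * real (Suc n) * x) has_field_derivative pi * real (Suc n)) (at y)"
        using DERIV_cmult[OF DERIV_ident, of "pi * real (Suc n)"] by simp
      have s: "((\<lambda>x. sin (pi * real (Suc n) * x)) has_field_derivative cos (pi*real (Suc n)*y) * (pi*real (Suc n))) (at y)"
        by (rule DERIV_chain2[OF DERIV_sin i])
      show ?thesis by (rule DERIV_cdivide[OF DERIV_cmult[OF s]])
    qed
    moreover have "(-1)^Suc n * \<rho>^Suc n * (cos (pi * real (Suc n) * y) * (pi * real (Suc n))) / real (Suc n)^2 = f' n y"
      unfolding f'_def by (simp add: field_simps power2_eq_square del: of_nat_Suc)
    ultimately show ?thesis by simp
  qed
  have b: "\<bar>f' n y\<bar> \<le> pi * \<rho>^Suc n" if "y \<in> UNIV" for n y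
  proof -
    have "\<bar>f' n y\<bar> = pi * \<rho>^Suc n * (\<bar>cos (pi * real (Suc n) * y)\<bar> / real (Suc n))"
      using r by (simp add: f'_def abs_mult abs_divide power_abs)
    also have "\<dots> \<le> pi * \<rho>^Suc n * 1"
    proof (intro mult_left_mono)
      have "\<bar>cos (pi * real (Suc n) * y)\<bar> \<le> 1" by simp
      also have "1 \<le> real (Suc n)" by simp
      finally show "\<bar>cos (pi * real (Suc n) * y)\<bar> / real (Suc n) \<le> 1" by (simp add: field_simps)
    qed (use r in auto)
    finally show ?thesis by simp
  qed
  have sB: "summable (\<lambda>n. pi * \<rho>^Suc n)"
  proof -
    have "summable (\<lambda>n. \<rho>^n)" using r by (intro summable_geometric) auto
    then have "summable (\<lambda>n. (pi * \<rho>) * \<rho>^n)" by (rule summable_mult)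
    then show ?thesis by (simp add: mult.assoc)
  qed
  have s0: "summable (\<lambda>n. (-1)^Suc n * \<rho>^Suc n * sin (pi * real (Suc n) * 0) / real (Suc n)^2)"
    by simp
  note sd = series_deriv(2)[where f = "\<lambda>n x. (-1)^Suc n * \<rho>^Suc n * sin (pi * real (Suc n) * x) / real (Suc n)^2",
      OF convex_UNIV open_UNIV UNIV_I s0 dd b sB UNIV_I]
  have cs: "(\<lambda>n. (-1)^Suc n * \<rho>^Suc n * cos (pi * real (Suc n) * x) / real (Suc n))
           sums (- ln (cmod (1 + complex_of_real \<rho> * cis (pi*x))))"
    by (rule cos_log_series[OF r])
  have "(\<Sum>n. f' n x) = pi * (- ln (cmod (1 + complex_of_real \<rho> * cis (pi*x))))"
    unfolding f'_def using sums_unique[OF sums_mult[OF cs, of pi]] by simp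
  then show ?thesis using sd[of x] by simp
qed

lemma Q_cont:
  fixes \<rho> :: "nat \<Rightarrow> real" and y :: real
  assumes lim: "\<rho> \<longlonglongrightarrow> 1" and r: "\<And>k. \<rho> k \<in> {0..1}"
  shows "(\<lambda>k. \<Sum>n. (-1)^Suc n * (\<rho> k)^Suc n * sin (pi * real (Suc n) * y) / real (Suc n)^2)
        \<longlonglongrightarrow> (\<Sum>n. (-1)^Suc n * sin (pi * real (Suc n) * y) / real (Suc n)^2)"
proof -
  define T where "T n r = (-1)^Suc n * r^Suc n * sin (pi * real (Suc n) * y) / real (Suc n)^2" for n r
  have bd: "norm (T n r) \<le> 1 / real (Suc n)^2" if "r \<in> {0..1}" for n r
  proof -
    have "norm (T n r) = r^Suc n * \<bar>sin (pi * real (Suc n) * y)\<bar> / real (Suc n)^2"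
      using that by (simp add: T_def abs_mult abs_divide power_abs)
    also have "\<dots> \<le> 1 * 1 / real (Suc n)^2"
      using that by (intro divide_right_mono mult_mono power_le_one) auto
    finally show ?thesis by simp
  qed
  have ul: "uniform_limit {0..1} (\<lambda>N r. \<Sum>n<N. T n r) (\<lambda>r. \<Sum>n. T n r) sequentially"
    by (rule Weierstrass_m_test[OF bd summable_inv_sq])
  have "continuous_on {0..1} (\<lambda>r. \<Sum>n. T n r)"
    by (rule uniform_limit_theorem[OF _ ul]) (auto simp: T_def intro!: continuous_intros always_eventually)
  from continuous_on_tendsto_compose[OF this lim] r
  have "(\<lambda>k. \<Sum>n. T n (\<rho> k)) \<longlonglongrightarrow> (\<Sum>n. T n 1)" by auto
  then show ?thesis by (simp add: T_def)
qed



lemma S2_deriv: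
  fixes a x :: real assumes a: "a < 1" and x: "x \<in> {-a<..<a}"
  shows "((\<lambda>x. \<Sum>n. (-1)^Suc n * sin (pi * real (Suc n) * x) / real (Suc n)^2) has_field_derivative
          -pi * ln (2 * cos (pi*x/2))) (at x)"
proof -
  define S where "S = {-a<..<a}"
  have a0: "0 < a" using x by auto
  define \<rho> where "\<rho> k = 1 - inverse (real (Suc k))" for k
  have r01: "0 \<le> \<rho> k" "\<rho> k < 1" for k by (auto simp: \<rho>_def field_simps)
  have rlim: "\<rho> \<longlonglongrightarrow> 1"
  proof -
    have "\<rho> = (\<lambda>n. 1 + - inverse (real (Suc n)))" by (simp add: \<rho>_def fun_eq_iff)
    then show ?thesis using LIMSEQ_inverse_real_of_nat_add_minus[of 1] by simp
  qed
  define Qf where "Qf k y = (\<Sum>n. (-1)^Suc n * (\<rho> k)^Suc n * sin (pi * real (Suc n) * y) / real (Suc n)^2)" for k y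
  define D where "D k y = -pi * ln (cmod (1 + complex_of_real (\<rho> k) * cis (pi*y)))" for k y
  define G where "G y = -pi * ln (2 * cos (pi*y/2))" for y
  define c where "c = cos (pi*a/2)"
  have c0: "c > 0" unfolding c_def
  proof (rule cos_gt_zero_pi)
    have "pi * a < pi * 1" using a by (intro mult_strict_left_mono) auto
    moreover have "0 < pi * a" using a0 by simp
    moreover have "0 < pi" by (rule pi_gt_zero)
    ultimately show "-(pi/2) < pi*a/2" "pi*a/2 < pi/2" by linarith+
  qed
  have yS: "\<bar>pi*y\<bar> < pi" if "y \<in> S" for y
  proof -
    have "\<bar>y\<bar> < 1" using that a by (auto simp: S_def)
    then have "pi * \<bar>y\<bar> < pi * 1" by (intro mult_strict_left_mono) auto
    then show ?thesis by (simp add: abs_mult)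
  qed
  have vc: "2 * cos (pi*y/2) \<ge> 2 * c" if "y \<in> S" for y
  proof -
    have "\<bar>y\<bar> \<le> a" using that by (auto simp: S_def)
    then have "\<bar>pi*y/2\<bar> \<le> pi*a/2" by (simp add: abs_mult)
    moreover have "pi*a/2 \<le> pi" using a a0 by simp
    ultimately have h: "\<bar>pi*y/2\<bar> \<le> pi*a/2" "\<bar>pi*y/2\<bar> \<le> pi" "pi*a/2 \<le> pi" by linarith+
    have p: "0 \<le> pi*a/2" using a0 by simp
    have iff: "cos (pi*a/2) \<le> cos \<bar>pi*y/2\<bar> \<longleftrightarrow> \<bar>pi*y/2\<bar> \<le> pi*a/2"
      by (rule cos_mono_le_eq[OF p h(3) abs_ge_zero h(2)])
    have "cos (pi*a/2) \<le> cos \<bar>pi*y/2\<bar>" using iff h(1) by blast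
    also have "cos \<bar>pi*y/2\<bar> = cos (pi*y/2)" by (rule cos_abs_real)
    finally show ?thesis by (simp add: c_def)
  qed
  have Dd: "((Qf k) has_derivative (*) (D k y)) (at y within S)" for k y
    using Q_deriv[OF r01(1) r01(2), of k y] unfolding Qf_def D_def has_field_derivative_def
    by (rule has_derivative_at_withinI)
  have unif: "\<forall>\<^sub>F k in sequentially. \<forall>y\<in>S. \<forall>h. norm (D k y * h - G y * h) \<le> e * norm h"
    if e: "e > 0" for e
  proof -
    define \<delta> where "\<delta> = min c (e * c / pi)"
    have d0: "\<delta> > 0" using c0 e by (simp add: \<delta>_def)
    have "\<forall>\<^sub>F k in sequentially. inverse (real (Suc k)) < \<delta>"
      by (rule order_tendstoD(2)[OF LIMSEQ_inverse_real_of_nat d0])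
    then show ?thesis
    proof (rule eventually_mono, intro ballI allI)
      fix k y h assume k: "inverse (real (Suc k)) < \<delta>" and y: "y \<in> S"
      have ek: "1 - \<rho> k < \<delta>" using k by (simp add: \<rho>_def)
      define u where "u = cmod (1 + complex_of_real (\<rho> k) * cis (pi*y))"
      define v where "v = 2 * cos (pi*y/2)"
      have v: "v = cmod (1 + cis (pi*y))" using norm_one_cis[OF yS[OF y]] by (simp add: v_def)
      have uv: "\<bar>u - v\<bar> \<le> 1 - \<rho> k" unfolding u_def v by (rule norm_diff_cis) (use r01[of k] in auto)
      have vge: "v \<ge> c" using vc[OF y] c0 by (simp add: v_def)
      have uge: "u \<ge> c" using uv vc[OF y] ek by (auto simp: v_def \<delta>_def abs_le_iff)
      have "D k y - G y = -pi * (ln u - ln v)"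
        by (simp add: D_def G_def u_def v_def algebra_simps)
      then have "\<bar>D k y - G y\<bar> = pi * \<bar>ln u - ln v\<bar>" by (simp add: abs_mult)
      also have "\<dots> \<le> pi * (\<bar>u - v\<bar> / c)" by (intro mult_left_mono ln_diff_bound c0 uge vge) auto
      also have "\<dots> \<le> pi * (\<delta> / c)" using uv ek c0 by (intro mult_left_mono divide_right_mono) auto
      also have "\<dots> \<le> pi * ((e * c / pi) / c)" using c0 by (intro mult_left_mono divide_right_mono) (auto simp: \<delta>_def)
      also have "\<dots> = e" using c0 by simp
      finally have "\<bar>D k y - G y\<bar> \<le> e" .
      then have "\<bar>D k y - G y\<bar> * \<bar>h\<bar> \<le> e * \<bar>h\<bar>" by (intro mult_right_mono) auto
      then show "norm (D k y * h - G y * h) \<le> e * norm h" by (simp add: left_diff_distrib[symmetric] abs_mult)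
    qed
  qed
  have z: "0 \<in> S" using a0 by (simp add: S_def)
  have cS: "convex S" by (simp add: S_def)
  have l0: "(\<lambda>k. Qf k 0) \<longlonglongrightarrow> 0" by (simp add: Qf_def)
  obtain g where g: "\<And>y. y \<in> S \<Longrightarrow> (\<lambda>k. Qf k y) \<longlonglongrightarrow> g y \<and> (g has_derivative (*) (G y)) (at y within S)"
    using has_derivative_sequence[where f = Qf and f' = "\<lambda>k y. (*) (D k y)" and g' = "\<lambda>y. (*) (G y)",
        OF cS Dd unif z l0] by blast
  have gS: "g y = (\<Sum>n. (-1)^Suc n * sin (pi * real (Suc n) * y) / real (Suc n)^2)" if "y \<in> S" for y
  proof (rule LIMSEQ_unique)
    show "(\<lambda>k. Qf k y) \<longlonglongrightarrow> g y" using g[OF that] by blast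
    show "(\<lambda>k. Qf k y) \<longlonglongrightarrow> (\<Sum>n. (-1)^Suc n * sin (pi * real (Suc n) * y) / real (Suc n)^2)"
      unfolding Qf_def by (rule Q_cont[OF rlim]) (use r01 in \<open>auto simp: less_imp_le\<close>)
  qed
  have xS: "x \<in> S" using x by (simp add: S_def)
  have "(g has_field_derivative G x) (at x within S)"
    using g[OF xS] by (simp add: has_field_derivative_def mult.commute)
  then have "(g has_field_derivative G x) (at x)"
  proof -
    have "at x within S = at x" by (rule at_within_open[OF xS]) (simp add: S_def)
    then show ?thesis using \<open>(g has_field_derivative G x) (at x within S)\<close> by simp
  qed
  then have "(g has_field_derivative -pi * ln (2 * cos (pi*x/2))) (at x)" by (simp add: G_def)
  then show ?thesis
    by (rule has_field_derivative_transform_within_open[OF _ _ xS]) (use gS in \<open>auto simp: S_def\<close>)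
qed



definition "S2f y = (\<Sum>n. (-1)^Suc n * sin (pi * real (Suc n) * y) / real (Suc n)^2)"
definition "S4f y = (\<Sum>n. (-1)^Suc n * sin (pi * real (Suc n) * y) / real (Suc n)^4)"
definition "C3f y = (\<Sum>n. (-1)^Suc n * cos (pi * real (Suc n) * y) / real (Suc n)^3)"
definition "C5f y = (\<Sum>n. (-1)^Suc n * cos (pi * real (Suc n) * y) / real (Suc n)^5)"
definition "Lf y = (\<Sum>k. ln (1 - y^2/(2*real k+1)^2))"
definition "Mf y = (\<Sum>k. md k y)"
definition "Fr r y = (\<Sum>k. tt r y k)"

lemma dC3: "(C3f has_field_derivative -pi * S2f y) (at y)"
  using cos_ser_deriv[of 2 y] unfolding C3f_def S2f_def by (simp add: numeral_eq_Suc)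

lemma dS4: "(S4f has_field_derivative pi * C3f y) (at y)"
  using sin_ser_deriv[of 3 y] unfolding C3f_def S4f_def by (simp add: numeral_eq_Suc)

lemma dC5: "(C5f has_field_derivative -pi * S4f y) (at y)"
  using cos_ser_deriv[of 4 y] unfolding C5f_def S4f_def by (simp add: numeral_eq_Suc)

lemma LF_eq: "\<bar>y\<bar> < 1 \<Longrightarrow> ln 2 + Lf y = ln (2 * cos (pi*y/2))"
proof -
  assume y: "\<bar>y\<bar> < 1"
  have c: "cos (pi*y/2) > 0"
  proof (rule cos_gt_zero_pi)
    have "pi * (-1) < pi * y" using y by (intro mult_strict_left_mono) (auto simp: abs_less_iff)
    moreover have "pi * y < pi * 1" using y by (intro mult_strict_left_mono) (auto simp: abs_less_iff)
    ultimately show "-(pi/2) < pi*y/2" "pi*y/2 < pi/2" by auto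
  qed
  have "Lf y = ln (cos (pi*y/2))" unfolding Lf_def using ml_sums[OF y] by (rule sums_unique[symmetric])
  then show ?thesis using c by (simp add: ln_mult)
qed

lemma derivs:
  fixes a y :: real assumes a: "a < 1" and y: "y \<in> {-a<..<a}"
  shows "(Lf has_field_derivative Mf y) (at y)"
    "(S2f has_field_derivative -pi * (ln 2 + Lf y)) (at y)"
    "r = Suc q \<Longrightarrow> (Fr r has_field_derivative (y/2)^(r-1) * Mf y) (at y)"
proof -
  have y1: "\<bar>y\<bar> < 1" using a y by auto
  show "(Lf has_field_derivative Mf y) (at y)"
    using Lsum_props[OF a y] unfolding Lf_def Mf_def by (simp add: fun_eq_iff)
  show "(S2f has_field_derivative -pi * (ln 2 + Lf y)) (at y)"
    using S2_deriv[OF a y] unfolding S2f_def LF_eq[OF y1] by simp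
  show "r = Suc q \<Longrightarrow> (Fr r has_field_derivative (y/2)^(r-1) * Mf y) (at y)"
    using F_props(2)[OF a y] unfolding Fr_def Mf_def by simp
qed

lemma zero_const:
  fixes H :: "real \<Rightarrow> real" and a x :: real
  assumes "\<And>y. y \<in> {-a<..<a} \<Longrightarrow> (H has_field_derivative 0) (at y)" "x \<in> {-a<..<a}" "H 0 = 0"
  shows "H x = 0"
proof -
  have z: "0 \<in> {-a<..<a}" using assms(2) by auto
  obtain c where "\<forall>y\<in>{-a<..<a}. H y = c"
    using has_field_derivative_zero_constant[of "{-a<..<a}" H] assms(1)
    by (auto intro: has_field_derivative_at_within)
  then show ?thesis using assms(2,3) z by metis
qed

lemma C3_zero: "C3f 0 = - zetaE 3"
proof -
  have s: "summable (\<lambda>n. (-1)^n / real (Suc n)^3 :: real)"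
  proof (rule summable_comparison_test[OF _ summable_inv_sq[of 1]], intro exI allI impI)
    fix n :: nat
    have "norm ((-1)^n / real (Suc n)^3 :: real) = 1 / real (Suc n)^3" by (simp add: abs_divide)
    also have "\<dots> \<le> 1 / real (Suc n)^2" using inv_pow_bound[of 3 1 n] by simp
    finally show "norm ((-1)^n / real (Suc n)^3 :: real) \<le> 1 / real (Suc n)^2" .
  qed
  have "C3f 0 = (\<Sum>n. - ((-1)^n / real (Suc n)^3))" unfolding C3f_def by simp
  also have "\<dots> = - (\<Sum>n. (-1)^n / real (Suc n)^3)" by (rule suminf_minus[OF s])
  finally show ?thesis unfolding zetaE_def by simp
qed

lemma C5_zero: "C5f 0 = - zetaE 5"
proof -
  have s: "summable (\<lambda>n. (-1)^n / real (Suc n)^5 :: real)"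
  proof (rule summable_comparison_test[OF _ summable_inv_sq[of 1]], intro exI allI impI)
    fix n :: nat
    have "norm ((-1)^n / real (Suc n)^5 :: real) = 1 / real (Suc n)^5" by (simp add: abs_divide)
    also have "\<dots> \<le> 1 / real (Suc n)^2" using inv_pow_bound[of 5 1 n] by simp
    finally show "norm ((-1)^n / real (Suc n)^5 :: real) \<le> 1 / real (Suc n)^2" .
  qed
  have "C5f 0 = (\<Sum>n. - ((-1)^n / real (Suc n)^5))" unfolding C5f_def by simp
  also have "\<dots> = - (\<Sum>n. (-1)^n / real (Suc n)^5)" by (rule suminf_minus[OF s])
  finally show ?thesis unfolding zetaE_def by simp
qed

lemma zeros: "S2f 0 = 0" "S4f 0 = 0" "Lf 0 = 0" "Fr r 0 = 0"
  by (simp_all add: S2f_def S4f_def Lf_def Fr_def tt_zero)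

lemma r3:
  fixes a x :: real assumes a: "a < 1" and x: "x \<in> {-a<..<a}"
  shows "Fr 3 x = (x/2)^2 * (ln 2 + Lf x) + (1/(2*pi^2) * C3f x + x/(2*pi) * S2f x + 1/(2*pi^2) * zetaE 3)"
proof -
  define h k1 k2 k3 lc where "h = (1/4::real)" and "k1 = 1/(2*pi^2)" and "k2 = 1/(2*pi)"
    and "k3 = 1/(2*pi^2) * zetaE 3" and "lc = ln (2::real)"
  define H where "H y = Fr 3 y - (h * y^2 * (lc + Lf y) + (k1 * C3f y + k2 * y * S2f y + k3))" for y
  have "H x = 0"
  proof (rule zero_const[OF _ x])
    fix y assume y: "y \<in> {-a<..<a}"
    note d = derivs[OF a y]
    have dF: "(Fr 3 has_field_derivative (y/2)^2 * Mf y) (at y)" using d(3)[of 3 2] by simp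
    show "(H has_field_derivative 0) (at y)" unfolding H_def[abs_def]
      apply (rule DERIV_cong)
       apply (rule derivative_eq_intros dF d(1) d(2)[folded lc_def] dC3 refl)+
      apply (simp add: h_def k1_def k2_def field_simps power2_eq_square)
      done
  next
    show "H 0 = 0" by (simp add: H_def zeros C3_zero k1_def k3_def)
  qed
  then show ?thesis by (simp add: H_def h_def k1_def k2_def k3_def lc_def power_divide)
qed


lemma r2:
  fixes a x :: real assumes a: "a < 1" and x: "x \<in> {-a<..<a}"
  shows "Fr 2 x = (x/2) * (ln 2 + Lf x) + 1/(2*pi) * S2f x"
proof -
  define h k1 lc where "h = (1/2::real)" and "k1 = 1/(2*pi)" and "lc = ln (2::real)"
  define H where "H y = Fr 2 y - (h * y * (lc + Lf y) + k1 * S2f y)" for y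
  have "H x = 0"
  proof (rule zero_const[OF _ x])
    fix y assume y: "y \<in> {-a<..<a}"
    note d = derivs[OF a y]
    have dF: "(Fr 2 has_field_derivative (y/2) * Mf y) (at y)" using d(3)[of 2 1] by simp
    show "(H has_field_derivative 0) (at y)" unfolding H_def[abs_def]
      apply (rule DERIV_cong)
       apply (rule derivative_eq_intros dF d(1) d(2)[folded lc_def] refl)+
      apply (simp add: h_def k1_def field_simps power2_eq_square)
      done
  next
    show "H 0 = 0" by (simp add: H_def zeros)
  qed
  then show ?thesis by (simp add: H_def h_def k1_def lc_def)
qed

lemma r4:
  fixes a x :: real assumes a: "a < 1" and x: "x \<in> {-a<..<a}"
  shows "Fr 4 x = (x/2)^3 * (ln 2 + Lf x) +
     (3 * x / (4 * pi ^ 2) * C3f x - 3 / (4 * pi ^ 3) * S4f x + 3 * x ^ 2 / (8 * pi) * S2f x)"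
proof -
  define h k1 k2 k3 lc where "h = (1/8::real)" and "k1 = 3/(4*pi^2)" and "k2 = 3/(4*pi^3)"
    and "k3 = 3/(8*pi)" and "lc = ln (2::real)"
  define H where "H y = Fr 4 y - (h * y^3 * (lc + Lf y) + (k1 * y * C3f y - k2 * S4f y + k3 * y^2 * S2f y))" for y
  have "H x = 0"
  proof (rule zero_const[OF _ x])
    fix y assume y: "y \<in> {-a<..<a}"
    note d = derivs[OF a y]
    have dF: "(Fr 4 has_field_derivative (y/2)^3 * Mf y) (at y)" using d(3)[of 4 3] by simp
    show "(H has_field_derivative 0) (at y)" unfolding H_def[abs_def]
      apply (rule DERIV_cong)
       apply (rule derivative_eq_intros dF d(1) d(2)[folded lc_def] dC3 dS4 refl)+
      apply (simp add: h_def k1_def k2_def k3_def field_simps power2_eq_square)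
      apply (simp add: eval_nat_numeral algebra_simps)
      done
  next
    show "H 0 = 0" by (simp add: H_def zeros)
  qed
  then show ?thesis by (simp add: H_def h_def k1_def k2_def k3_def lc_def power_divide)
qed

lemma r5:
  fixes a x :: real assumes a: "a < 1" and x: "x \<in> {-a<..<a}"
  shows "Fr 5 x = (x/2)^4 * (ln 2 + Lf x) +
     (- 3 / (2 * pi ^ 4) * C5f x + 3 * x ^ 2 / (4 * pi ^ 2) * C3f x - 3 * x / (2 * pi ^ 3) * S4f x
                + x ^ 3 / (4 * pi) * S2f x - 3 / (2 * pi ^ 4) * zetaE 5)"
proof -
  define h k1 k2 k3 k4 k5 lc where "h = (1/16::real)" and "k1 = 3/(2*pi^4)" and "k2 = 3/(4*pi^2)"
    and "k3 = 3/(2*pi^3)" and "k4 = 1/(4*pi)" and "k5 = 3/(2*pi^4) * zetaE 5" and "lc = ln (2::real)"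
  define H where "H y = Fr 5 y - (h * y^4 * (lc + Lf y) +
     (- k1 * C5f y + k2 * y^2 * C3f y - k3 * y * S4f y + k4 * y^3 * S2f y - k5))" for y
  have "H x = 0"
  proof (rule zero_const[OF _ x])
    fix y assume y: "y \<in> {-a<..<a}"
    note d = derivs[OF a y]
    have dF: "(Fr 5 has_field_derivative (y/2)^4 * Mf y) (at y)" using d(3)[of 5 4] by simp
    show "(H has_field_derivative 0) (at y)" unfolding H_def[abs_def]
      apply (rule DERIV_cong)
       apply (rule derivative_eq_intros dF d(1) d(2)[folded lc_def] dC3 dS4 dC5 refl)+
      apply (simp add: h_def k1_def k2_def k3_def k4_def field_simps power2_eq_square)
      apply (simp add: eval_nat_numeral algebra_simps)
      done
  next
    show "H 0 = 0" by (simp add: H_def zeros C5_zero k1_def k5_def)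
  qed
  then show ?thesis by (simp add: H_def h_def k1_def k2_def k3_def k4_def k5_def lc_def power_divide)
qed



theorem corollary2p13:
  fixes x :: real
  assumes "0 \<le> x" and "x < 1"
  defines "S2 \<equiv> (\<Sum>n. (-1) ^ Suc n * sin (pi * real (Suc n) * x) / real (Suc n) ^ 2)"
      and "S4 \<equiv> (\<Sum>n. (-1) ^ Suc n * sin (pi * real (Suc n) * x) / real (Suc n) ^ 4)"
      and "C3 \<equiv> (\<Sum>n. (-1) ^ Suc n * cos (pi * real (Suc n) * x) / real (Suc n) ^ 3)"
      and "C5 \<equiv> (\<Sum>n. (-1) ^ Suc n * cos (pi * real (Suc n) * x) / real (Suc n) ^ 5)"
  shows "mcos 2 (x / 2) = (2 * cos (pi * x / 2)) powr (x / 2) * exp (1 / (2 * pi) * S2) \<and>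
         mcos 3 (x / 2) = (2 * cos (pi * x / 2)) powr ((x / 2) ^ 2) *
           exp (1 / (2 * pi ^ 2) * C3 + x / (2 * pi) * S2 + 1 / (2 * pi ^ 2) * zetaE 3) \<and>
         mcos 4 (x / 2) = (2 * cos (pi * x / 2)) powr ((x / 2) ^ 3) *
           exp (3 * x / (4 * pi ^ 2) * C3 - 3 / (4 * pi ^ 3) * S4 + 3 * x ^ 2 / (8 * pi) * S2) \<and>
         mcos 5 (x / 2) = (2 * cos (pi * x / 2)) powr ((x / 2) ^ 4) *
           exp (- 3 / (2 * pi ^ 4) * C5 + 3 * x ^ 2 / (4 * pi ^ 2) * C3 - 3 * x / (2 * pi ^ 3) * S4
                + x ^ 3 / (4 * pi) * S2 - 3 / (2 * pi ^ 4) * zetaE 5)"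
proof -
  define a where "a = (1+x)/2"
  have a: "a < 1" using assms(1,2) unfolding a_def by (simp add: field_simps)
  have "-((1+x)/2) < x" "x < (1+x)/2" using assms(1,2) by (simp_all add: field_simps)
  then have xa: "x \<in> {-a<..<a}" unfolding a_def by simp
  have x1: "\<bar>x\<bar> < 1" using assms(1,2) by auto
  have c: "cos (pi*x/2) > 0"
  proof (rule cos_gt_zero_pi)
    have "pi * (-1) < pi * x" using x1 by (intro mult_strict_left_mono) (auto simp: abs_less_iff)
    moreover have "pi * x < pi * 1" using x1 by (intro mult_strict_left_mono) (auto simp: abs_less_iff)
    ultimately show "-(pi/2) < pi*x/2" "pi*x/2 < pi/2" by auto
  qed
  have L: "ln 2 + Lf x = ln (2 * cos (pi*x/2))" by (rule LF_eq[OF x1])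
  have m: "mcos r (x/2) = exp (Fr r x)" if "r = Suc q" for r q
    using mcos_exp[OF x1 F_props(1)[OF a xa that]] by (simp add: Fr_def)
  have key: "exp (c * ln (2 * cos (pi*x/2)) + R) = (2 * cos (pi*x/2)) powr c * exp R" for c R
    using c by (simp add: powr_def exp_add)
  have eS: "S2 = S2f x" "S4 = S4f x" "C3 = C3f x" "C5 = C5f x"
    by (simp_all add: S2_def S4_def C3_def C5_def S2f_def S4f_def C3f_def C5f_def)
  have m2: "mcos 2 (x/2) = exp (Fr 2 x)" using m[of 2 1] by simp
  have m3: "mcos 3 (x/2) = exp (Fr 3 x)" using m[of 3 2] by simp
  have m4: "mcos 4 (x/2) = exp (Fr 4 x)" using m[of 4 3] by simp
  have m5: "mcos 5 (x/2) = exp (Fr 5 x)" using m[of 5 4] by simp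
  show ?thesis unfolding eS m2 m3 m4 m5 r2[OF a xa] r3[OF a xa] r4[OF a xa] r5[OF a xa] L
    using c by (simp add: powr_def exp_add mult_ac)
qed

end
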